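(* Suppose monotone treatment response and monotone treatment selection hold. Then under Design 1, for all $x\in\mathcal X$, $\Gamma(x,p_0)\le\Gamma(x,0)$.
   Context: Population variables: $Y^*\in\{0,1\}$ (outcome), $T^*\in\{0,1\}$ (treatment), $X^*$ (covariate vector); potential outcomes $Y^*(1),Y^*(0)\in\{0,1\}$ satisfy $Y^*=T^*Y^*(1)+(1-T^* )Y^*(0)$; $p_0:=\Pr(Y^*=1)$. The observed vector $(Y,T,X)$ arises from Bernoulli sampling: $Y\in\{0,1\}$ is drawn with known probability $h_0:=\Pr(Y=1)\in(0,1)$, and given $Y=y$, $(T,X)$ is drawn from a distribution $\mathcal P_y$. Design 1 (case-control): for all $t\in\{0,1\}$, $x\in\mathcal X$, $y\in\{0,1\}$, $f_{X|Y}(x\mid y)=f_{X^*|Y^*}(x\mid y)$ and $\Pr(T=t\mid X=x,Y=y)=\Pr(T^*=t\mid X^*=x,Y^*=y)$, where $f$ denotes densities (or mass functions). Standing common support assumption: the support of $X^*$ and that of $X$ given $Y=y$ for $y=0,1$ coincide; call it $\mathcal X$. Let $\Pi(t\mid y,x):=\Pr(T=t\mid Y=y,X=x)$, assumed nonzero for all $t,y$. For $p\in[0,1]$, $r(x,p):=\frac{p(1-h_0)\Pr(Y=1\mid X=x)}{p(1-h_0)\Pr(Y=1\mid X=x)+h_0(1-p)\Pr(Y=0\mid X=x)}$ and $\Gamma(x,p):=\frac{\Pi(1\mid 1,x)}{\Pi(0\mid 1,x)}\cdot\frac{\Pi(0\mid 0,x)+r(x,p)\{\Pi(0\mid 1,x)-\Pi(0\mid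 0,x)\}}{\Pi(1\mid 0,x)+r(x,p)\{\Pi(1\mid 1,x)-\Pi(1\mid 0,x)\}}$. Monotone treatment response: $Y^*(1)\ge Y^*(0)$ almost surely. Monotone treatment selection: for all $t\in\{0,1\}$, $x\in\mathcal X$, $\Pr\{Y^*(t)=1\mid T^*=1,X^*=x\}\ge\Pr\{Y^*(t)=1\mid T^*=0,X^*=x\}$. *)

theory Defs
  imports "HOL-Analysis.Analysis"
begin

text \<open>
The joint law of (Y*(1), Y*(0), T*, X*) is given by a density
g y1 y0 t x with respect to (counting measure on bool^3) times a base measure mu
on the covariate space (mu = counting measure gives discrete covariates, mu = Lebesgue
measure gives continuous ones).  Binary variables are encoded as bool (True = 1).
\<close>

definition ystar :: "bool \<Rightarrow> bool \<Rightarrow> bool \<Rightarrow> bool" where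
  "ystar t y1 y0 = (if t then y1 else y0)"

definition popYTX :: "(bool \<Rightarrow> bool \<Rightarrow> bool \<Rightarrow> 'x \<Rightarrow> real) \<Rightarrow> bool \<Rightarrow> bool \<Rightarrow> 'x \<Rightarrow> real" where
  "popYTX g y t x = (\<Sum>y1\<in>UNIV. \<Sum>y0\<in>UNIV. if ystar t y1 y0 = y then g y1 y0 t x else 0)"

definition popYX :: "(bool \<Rightarrow> bool \<Rightarrow> bool \<Rightarrow> 'x \<Rightarrow> real) \<Rightarrow> bool \<Rightarrow> 'x \<Rightarrow> real" where
  "popYX g y x = popYTX g y True x + popYTX g y False x"

definition popX :: "(bool \<Rightarrow> bool \<Rightarrow> bool \<Rightarrow> 'x \<Rightarrow> real) \<Rightarrow> 'x \<Rightarrow> real" where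
  "popX g x = popYX g True x + popYX g False x"

definition p0 :: "'x measure \<Rightarrow> (bool \<Rightarrow> bool \<Rightarrow> bool \<Rightarrow> 'x \<Rightarrow> real) \<Rightarrow> real" where
  "p0 \<mu> g = (\<integral>x. popYX g True x \<partial>\<mu>)"

definition f_Xstar_given_Ystar ::
  "'x measure \<Rightarrow> (bool \<Rightarrow> bool \<Rightarrow> bool \<Rightarrow> 'x \<Rightarrow> real) \<Rightarrow> 'x \<Rightarrow> bool \<Rightarrow> real" where
  "f_Xstar_given_Ystar \<mu> g x y = popYX g y x / (if y then p0 \<mu> g else 1 - p0 \<mu> g)"

definition Pr_Tstar_given_XY ::
  "(bool \<Rightarrow> bool \<Rightarrow> bool \<Rightarrow> 'x \<Rightarrow> real) \<Rightarrow> bool \<Rightarrow> 'x \<Rightarrow> bool \<Rightarrow> real" where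
  "Pr_Tstar_given_XY g t x y = popYTX g y t x / popYX g y x"

definition Pr_Ypot_given_TX ::
  "(bool \<Rightarrow> bool \<Rightarrow> bool \<Rightarrow> 'x \<Rightarrow> real) \<Rightarrow> bool \<Rightarrow> bool \<Rightarrow> 'x \<Rightarrow> real" where
  "Pr_Ypot_given_TX g t t' x =
     (\<Sum>y1\<in>UNIV. \<Sum>y0\<in>UNIV. if (if t then y1 else y0) then g y1 y0 t' x else 0)
     / (\<Sum>y1\<in>UNIV. \<Sum>y0\<in>UNIV. g y1 y0 t' x)"

definition suppX :: "(bool \<Rightarrow> bool \<Rightarrow> bool \<Rightarrow> 'x \<Rightarrow> real) \<Rightarrow> 'x set" where
  "suppX g = {x. popX g x > 0}"

text \<open>
Observed model.  fo y t x is the density (w.r.t. counting measure on T times mu) of the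
distribution P_y of (T, X) given Y = y; h0 = Pr(Y = 1).
\<close>

definition f_X_given_Y :: "(bool \<Rightarrow> bool \<Rightarrow> 'x \<Rightarrow> real) \<Rightarrow> 'x \<Rightarrow> bool \<Rightarrow> real" where
  "f_X_given_Y fo x y = fo y True x + fo y False x"

definition Pi :: "(bool \<Rightarrow> bool \<Rightarrow> 'x \<Rightarrow> real) \<Rightarrow> bool \<Rightarrow> bool \<Rightarrow> 'x \<Rightarrow> real" where
  "Pi fo t y x = fo y t x / f_X_given_Y fo x y"

definition Pr_Y_given_X :: "real \<Rightarrow> (bool \<Rightarrow> bool \<Rightarrow> 'x \<Rightarrow> real) \<Rightarrow> bool \<Rightarrow> 'x \<Rightarrow> real" where
  "Pr_Y_given_X h0 fo y x =
     (if y then h0 else 1 - h0) * f_X_given_Y fo x y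
     / (h0 * f_X_given_Y fo x True + (1 - h0) * f_X_given_Y fo x False)"

definition rfun :: "real \<Rightarrow> (bool \<Rightarrow> bool \<Rightarrow> 'x \<Rightarrow> real) \<Rightarrow> 'x \<Rightarrow> real \<Rightarrow> real" where
  "rfun h0 fo x p =
     p * (1 - h0) * Pr_Y_given_X h0 fo True x
     / (p * (1 - h0) * Pr_Y_given_X h0 fo True x + h0 * (1 - p) * Pr_Y_given_X h0 fo False x)"

definition Gamma :: "real \<Rightarrow> (bool \<Rightarrow> bool \<Rightarrow> 'x \<Rightarrow> real) \<Rightarrow> 'x \<Rightarrow> real \<Rightarrow> real" where
  "Gamma h0 fo x p =
     (Pi fo True True x / Pi fo False True x) *
     ((Pi fo False False x + rfun h0 fo x p * (Pi fo False True x - Pi fo False False x))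
      / (Pi fo True False x + rfun h0 fo x p * (Pi fo True True x - Pi fo True False x)))"

end

theory Submission
  imports Defs
begin

lemma key_ineq:
  fixes A B C D E :: real
  assumes "A > 0" "B > 0" "C \<ge> 0" "D \<ge> 0" "E \<ge> 0"
    and "(C + D) / (C + D + E) \<le> A / (A + B)"
  shows "B / (B + D + E) \<le> A / (A + C)"
proof -
  have "A * E \<ge> (C + D) * B"
  proof (cases "C + D + E = 0")
    case True
    then have "C = 0" "D = 0" using assms by auto
    then show ?thesis using assms by simp
  next
    case False
    then have "C + D + E > 0" using assms by linarith
    then have "(C + D) * (A + B) \<le> A * (C + D + E)"
      using assms(6) assms(1,2) by (simp add: divide_le_eq le_divide_eq field_simps)
    then show ?thesis by (simp add: algebra_simps)
  qed
  moreover have "(C + D) * B \<ge> C * B" using assms by (simp add: mult_right_mono)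
  moreover have "A * D \<ge> 0" using assms by simp
  ultimately have "B * (A + C) \<le> A * (B + D + E)" by (simp add: algebra_simps)
  then show ?thesis using assms by (simp add: divide_le_eq le_divide_eq field_simps)
qed

lemma final_ineq:
  fixes k a0 r a1 :: real
  assumes "k \<ge> 0" "a0 > 0" "r \<ge> 0" "a1 \<ge> a0"
  shows "k * ((1 - a0 + r * ((1 - a1) - (1 - a0))) / (a0 + r * (a1 - a0)))
         \<le> k * ((1 - a0 + 0 * ((1 - a1) - (1 - a0))) / (a0 + 0 * (a1 - a0)))"
proof -
  define q where "q = a0 + r * (a1 - a0)"
  have q: "q \<ge> a0" using assms unfolding q_def by simp
  have "(1 - q) / q \<le> (1 - a0) / a0"
  proof -
    have "a0 * (1 - q) \<le> q * (1 - a0)" using q by (simp add: algebra_simps)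
    then show ?thesis using q assms by (simp add: divide_le_eq le_divide_eq field_simps)
  qed
  moreover have "1 - a0 + r * ((1 - a1) - (1 - a0)) = 1 - q" unfolding q_def by (simp add: algebra_simps)
  ultimately have "k * ((1 - q) / q) \<le> k * ((1 - a0) / a0)" using assms by (intro mult_left_mono) auto
  then show ?thesis using \<open>1 - a0 + r * ((1 - a1) - (1 - a0)) = 1 - q\<close> unfolding q_def[symmetric] by (metis mult_zero_left add_0_right diff_self mult_zero_right add.right_neutral)
qed

theorem lemmaA6:
  fixes \<mu> :: "'x measure"
    and g :: "bool \<Rightarrow> bool \<Rightarrow> bool \<Rightarrow> 'x \<Rightarrow> real"
    and fo :: "bool \<Rightarrow> bool \<Rightarrow> 'x \<Rightarrow> real"
    and h0 :: real
  assumes g_nonneg: "\<And>y1 y0 t x. g y1 y0 t x \<ge> 0"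
    and g_int: "\<And>y1 y0 t. integrable \<mu> (g y1 y0 t)"
    and g_norm: "(\<Sum>y1\<in>UNIV. \<Sum>y0\<in>UNIV. \<Sum>t\<in>UNIV. \<integral>x. g y1 y0 t x \<partial>\<mu>) = 1"
    and p0_range: "0 < p0 \<mu> g" "p0 \<mu> g < 1"
    and h0_range: "0 < h0" "h0 < 1"
    and fo_nonneg: "\<And>y t x. fo y t x \<ge> 0"
    and fo_int: "\<And>y t. integrable \<mu> (fo y t)"
    and fo_norm: "\<And>y. (\<Sum>t\<in>UNIV. \<integral>x. fo y t x \<partial>\<mu>) = 1"
    and common_support: "\<And>y. {x. f_X_given_Y fo x y > 0} = suppX g"
    and Pi_nonzero: "\<And>t y x. x \<in> suppX g \<Longrightarrow> Pi fo t y x \<noteq> 0"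
    and design1_X: "\<And>x y. x \<in> suppX g \<Longrightarrow> f_X_given_Y fo x y = f_Xstar_given_Ystar \<mu> g x y"
    and design1_T: "\<And>t x y. x \<in> suppX g \<Longrightarrow> Pi fo t y x = Pr_Tstar_given_XY g t x y"
    and MTR: "\<And>t x. g False True t x = 0"
    and MTS: "\<And>t x. x \<in> suppX g \<Longrightarrow> Pr_Ypot_given_TX g t True x \<ge> Pr_Ypot_given_TX g t False x"
  shows "\<forall>x\<in>suppX g. Gamma h0 fo x (p0 \<mu> g) \<le> Gamma h0 fo x 0"
proof
  fix x assume x: "x \<in> suppX g"
  define A where "A = g True True True x + g True False True x"
  define B where "B = g False False True x"
  define C where "C = g True True False x"
  define D where "D = g True False False x"
  define E where "E = g False False False x"
  have a1: "Pi fo True True x = A / (A + C)"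
    using design1_T[OF x, of True True] MTR[of True x] MTR[of False x]
    by (simp add: Pr_Tstar_given_XY_def popYTX_def popYX_def ystar_def UNIV_bool A_def C_def algebra_simps)
  have a0: "Pi fo True False x = B / (B + D + E)"
    using design1_T[OF x, of True False] MTR[of True x] MTR[of False x]
    by (simp add: Pr_Tstar_given_XY_def popYTX_def popYX_def ystar_def UNIV_bool B_def D_def E_def algebra_simps)
  have mts: "(C + D) / (C + D + E) \<le> A / (A + B)"
    using MTS[OF x, of True] MTR[of True x] MTR[of False x]
    by (simp add: Pr_Ypot_given_TX_def UNIV_bool A_def B_def C_def D_def E_def algebra_simps)
  have A0: "A \<ge> 0" "C \<ge> 0" "B \<ge> 0" "D \<ge> 0" "E \<ge> 0"
    unfolding A_def B_def C_def D_def E_def using g_nonneg by (auto intro: add_nonneg_nonneg)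
  have Apos: "A > 0" using Pi_nonzero[OF x, of True True] a1 A0 by force
  have Bpos: "B > 0" using Pi_nonzero[OF x, of True False] a0 A0 by force
  have a10: "Pi fo True False x \<le> Pi fo True True x"
    using key_ineq[OF Apos Bpos A0(2,4,5) mts] a0 a1 by simp
  have fpos: "f_X_given_Y fo x y > 0" for y using common_support[of y] x by blast
  have compl: "Pi fo False y x = 1 - Pi fo True y x" for y
    using fpos[of y] by (simp add: Pi_def f_X_given_Y_def field_simps)
  have Pnn: "Pi fo t y x \<ge> 0" for t y
    using fpos[of y] fo_nonneg by (simp add: Pi_def)
  have a0pos: "Pi fo True False x > 0" using Pnn[of True False] Pi_nonzero[OF x, of True False] by linarith
  have kpos: "Pi fo True True x / Pi fo False True x \<ge> 0" using Pnn by simp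
  have PYnn: "Pr_Y_given_X h0 fo y x \<ge> 0" for y
  proof -
    have "h0 * f_X_given_Y fo x True + (1 - h0) * f_X_given_Y fo x False \<ge> 0"
      using fpos[of True] fpos[of False] h0_range by (intro add_nonneg_nonneg mult_nonneg_nonneg) auto
    moreover have "(if y then h0 else 1 - h0) * f_X_given_Y fo x y \<ge> 0"
      using fpos[of y] h0_range by (intro mult_nonneg_nonneg) auto
    ultimately show ?thesis unfolding Pr_Y_given_X_def by simp
  qed
  have r0: "rfun h0 fo x 0 = 0" by (simp add: rfun_def)
  have rnn: "rfun h0 fo x (p0 \<mu> g) \<ge> 0"
    unfolding rfun_def using PYnn p0_range h0_range
    by (intro divide_nonneg_nonneg) (auto intro!: add_nonneg_nonneg mult_nonneg_nonneg less_imp_le)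
  show "Gamma h0 fo x (p0 \<mu> g) \<le> Gamma h0 fo x 0"
    unfolding Gamma_def r0 compl[of True] compl[of False]
    using final_ineq[OF kpos a0pos rnn a10] compl[of True] by simp
qed

end
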